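(* Let $x\in[n]$ be $a$-below, $c=T[x]$ and $i=\mathrm{bwt}(x)$. For every $c$-run break $j<i-a$ and every $j'\in\{j-1,j\}$ with $\mathrm{BWT}_r[j']=c$, $$\big|\mathrm{lcs}\big(T[\mathrm{text}(j')-\mathrm{LCP}_r[j],\mathrm{text}(j')],\,T[1,x]\big)\big|\le\big|\mathrm{lcs}\big(T[1,x],\,T[\mathrm{text}(i-a)-\mathrm{LCP}_r[i-a],\mathrm{text}(i-a)]\big)\big|.$$
   Context: Let $T=T[1,n]\in\Sigma^n$, $n\ge2$, over $\Sigma=\{1,\dots,\sigma\}$, with $T[1]=\$$ the smallest character, occurring only at position 1, and every character of $\Sigma$ occurring in $T$. $T[i,j]=T[i]\cdots T[j]$ (empty if $i>j$). Let $\overleftarrow T=T[n]\cdots T[1]$; $\mathrm{SA}_r$ is the suffix array of $\overleftarrow T$; $\mathrm{LCP}_r[1]=0$ and for $i\ge2$, $\mathrm{LCP}_r[i]$ is the length of the longest common prefix of the suffixes of $\overleftarrow T$ starting at $\mathrm{SA}_r[i-1]$ and $\mathrm{SA}_r[i]$; $\mathrm{BWT}_r[i]=\overleftarrow T[\mathrm{SA}_r[i]-1]$ if $\mathrm{SA}_r[i]>1$, else $\overleftarrow T[n]$. $\mathrm{text}(i)=n-\mathrm{SA}_r[i]+1$, $\mathrm{bwt}(x)=\mathrm{SA}_r^{-1}[n+1-x]$. $\mathrm{lcs}(\alpha,\beta)$ is the longest common suffix of strings $\alpha,\beta$ and $|\cdot|$ denotes length. For $i\in[2,n]$, $c\in\Sigma$,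 $i$ is a $c$-run break if $\mathrm{BWT}_r[i-1]\ne\mathrm{BWT}_r[i]$ and $c\in\{\mathrm{BWT}_r[i-1],\mathrm{BWT}_r[i]\}$. With $i=\mathrm{bwt}(x)$, $x$ is $a$-below if $a\in[0,i-2]$ and $\mathrm{BWT}_r[i-a-1]\ne\mathrm{BWT}_r[i-a]=\dots=\mathrm{BWT}_r[i]$. *)

theory Defs
  imports Main "HOL-Library.List_Lexorder"
begin

text \<open>Texts are lists of naturals, accessed 1-indexed: position k of T is T ! (k-1).\<close>

definition ch :: "nat list \<Rightarrow> nat \<Rightarrow> nat" where
  "ch T k = T ! (k - 1)"

definition substr :: "nat list \<Rightarrow> nat \<Rightarrow> nat \<Rightarrow> nat list" where
  "substr T i j = (if i > j then [] else take (j - i + 1) (drop (i - 1) T))"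

fun lcp :: "nat list \<Rightarrow> nat list \<Rightarrow> nat list" where
  "lcp (a # as) (b # bs) = (if a = b then a # lcp as bs else [])"
| "lcp _ _ = []"

definition lcs :: "nat list \<Rightarrow> nat list \<Rightarrow> nat list" where
  "lcs a b = rev (lcp (rev a) (rev b))"

definition rsuf :: "nat list \<Rightarrow> nat \<Rightarrow> nat list" where
  "rsuf T p = drop (p - 1) (rev T)"

text \<open>Suffix array of the reversed text, as a list: positions 1..n sorted by their suffixes
  (lexicographic order, a proper prefix being smaller).\<close>
definition SA_list :: "nat list \<Rightarrow> nat list" where
  "SA_list T = sort_key (rsuf T) [1..<length T + 1]"

definition SAr :: "nat list \<Rightarrow> nat \<Rightarrow> nat" where
  "SAr T i = SA_list T ! (i - 1)"

definition SAr_inv :: "nat list \<Rightarrow> nat \<Rightarrow> nat" where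
  "SAr_inv T p = (THE i. i \<in> {1..length T} \<and> SAr T i = p)"

definition LCPr :: "nat list \<Rightarrow> nat \<Rightarrow> nat" where
  "LCPr T i = (if i = 1 then 0
     else length (lcp (rsuf T (SAr T (i - 1))) (rsuf T (SAr T i))))"

definition BWTr :: "nat list \<Rightarrow> nat \<Rightarrow> nat" where
  "BWTr T i = (if SAr T i > 1 then ch (rev T) (SAr T i - 1) else ch (rev T) (length T))"

definition textpos :: "nat list \<Rightarrow> nat \<Rightarrow> nat" where
  "textpos T i = length T - SAr T i + 1"

definition bwtpos :: "nat list \<Rightarrow> nat \<Rightarrow> nat" where
  "bwtpos T x = SAr_inv T (length T + 1 - x)"

definition run_break :: "nat list \<Rightarrow> nat \<Rightarrow> nat \<Rightarrow> bool" where
  "run_break T c i \<longleftrightarrow> i \<in> {2..length T} \<and> BWTr T (i - 1) \<noteq> BWTr T i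
      \<and> c \<in> {BWTr T (i - 1), BWTr T i}"

definition a_below :: "nat list \<Rightarrow> nat \<Rightarrow> nat \<Rightarrow> bool" where
  "a_below T a x \<longleftrightarrow> (let i = bwtpos T x in
      a \<le> i - 2 \<and> 2 \<le> i \<and> BWTr T (i - a - 1) \<noteq> BWTr T (i - a)
      \<and> (\<forall>k \<in> {i - a..i}. BWTr T k = BWTr T i))"

end

theory Submission
  imports Defs
begin

lemma lcp_comm: "lcp a b = lcp b a"
  by (induction a b rule: lcp.induct) auto

lemma lcp_take1: "lcp (take k a) b = take k (lcp a b)"
  by (induction a b arbitrary: k rule: lcp.induct) (auto simp: take_Cons split: nat.splits)

lemma lcp_nth: "t < length (lcp u v) \<Longrightarrow> u ! t = v ! t \<and> t < length u \<and> t < length v"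
  by (induction u v arbitrary: t rule: lcp.induct) (auto simp: nth_Cons split: nat.splits if_splits)

lemma lcp_sorted: "(xs::nat list) \<le> ys \<Longrightarrow> ys \<le> zs \<Longrightarrow>
   length (lcp xs zs) \<le> length (lcp xs ys) \<and> length (lcp xs zs) \<le> length (lcp ys zs)"
proof (induction xs arbitrary: ys zs)
  case Nil then show ?case by simp
next
  case (Cons a xs)
  then obtain b ys' where ys: "ys = b # ys'" by (cases ys) auto
  with Cons obtain c zs' where zs: "zs = c # zs'" by (cases zs) auto
  show ?case
  proof (cases "a = c")
    case True
    with Cons.prems ys zs have "a = b" "xs \<le> ys'" "ys' \<le> zs'" by auto
    with Cons.IH[OF this(2,3)] True ys zs show ?thesis by auto
  next
    case False then show ?thesis using ys zs by auto
  qed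
qed

lemma SA_props:
  shows "length (SA_list T) = length T" "distinct (SA_list T)" "set (SA_list T) = {1..length T}"
    "sorted (map (rsuf T) (SA_list T))"
proof -
  show "length (SA_list T) = length T" unfolding SA_list_def length_sort length_upt by simp
  show "distinct (SA_list T)" unfolding SA_list_def by simp
  show "set (SA_list T) = {1..length T}" unfolding SA_list_def by auto
  show "sorted (map (rsuf T) (SA_list T))" unfolding SA_list_def by (rule sorted_sort_key)
qed

lemma SAr_range: "k \<in> {1..length T} \<Longrightarrow> SAr T k \<in> {1..length T}"
proof -
  assume k: "k \<in> {1..length T}"
  then have "k - 1 < length (SA_list T)" using SA_props(1)[of T] by auto
  then have "SA_list T ! (k-1) \<in> set (SA_list T)" by (rule nth_mem)
  then show ?thesis unfolding SAr_def SA_props(3) .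
qed

lemma SAr_inj: "k \<in> {1..length T} \<Longrightarrow> l \<in> {1..length T} \<Longrightarrow> SAr T k = SAr T l \<Longrightarrow> k = l"
proof -
  assume k: "k \<in> {1..length T}" and l: "l \<in> {1..length T}" and e: "SAr T k = SAr T l"
  have "k - 1 < length (SA_list T)" "l - 1 < length (SA_list T)" using SA_props(1)[of T] k l by auto
  then have "k - 1 = l - 1" using e SA_props(2)[of T] nth_eq_iff_index_eq unfolding SAr_def by blast
  then show "k = l" using k l by auto
qed

lemma SAr_sorted: "k \<le> l \<Longrightarrow> 1 \<le> k \<Longrightarrow> l \<le> length T \<Longrightarrow> rsuf T (SAr T k) \<le> rsuf T (SAr T l)"
proof -
  assume a: "k \<le> l" "1 \<le> k" "l \<le> length T"
  have "map (rsuf T) (SA_list T) ! (k - 1) \<le> map (rsuf T) (SA_list T) ! (l - 1)"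
    using SA_props(1,4)[of T] a by (intro sorted_nth_mono) auto
  then show ?thesis using SA_props(1)[of T] a unfolding SAr_def by simp
qed

lemma bwtpos_props: assumes "x \<in> {1..length T}"
  shows "bwtpos T x \<in> {1..length T}" "SAr T (bwtpos T x) = length T + 1 - x"
proof -
  let ?p = "length T + 1 - x"
  have "?p \<in> set (SA_list T)" using SA_props(3)[of T] assms by auto
  then obtain k where k: "k < length T" "SA_list T ! k = ?p"
    using SA_props(1)[of T] by (metis in_set_conv_nth)
  have ex: "Suc k \<in> {1..length T} \<and> SAr T (Suc k) = ?p" using k unfolding SAr_def by auto
  have "(THE i. i \<in> {1..length T} \<and> SAr T i = ?p) = Suc k"
    apply (rule the_equality)
    using ex apply blast
    using ex SAr_inj[of _ T "Suc k"] by metis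
  then show "bwtpos T x \<in> {1..length T}" "SAr T (bwtpos T x) = ?p"
    using ex unfolding bwtpos_def SAr_inv_def by auto
qed

lemma len_rsuf: "p \<in> {1..length T} \<Longrightarrow> length (rsuf T p) = length T - p + 1"
  unfolding rsuf_def by auto

lemma rsuf_distinct_lcp:
  assumes "T ! 0 = 1" "\<forall>k \<in> {2..length T}. ch T k \<noteq> 1"
    and "p \<in> {1..length T}" "q \<in> {1..length T}" "p \<noteq> q"
  shows "length (lcp (rsuf T p) (rsuf T q)) < length (rsuf T p)"
proof (rule ccontr)
  let ?n = "length T"
  assume "\<not> ?thesis"
  then have "length (rsuf T p) - 1 < length (lcp (rsuf T p) (rsuf T q))"
    using assms len_rsuf[of p T] by auto
  from lcp_nth[OF this] have e: "rsuf T p ! (?n - p) = rsuf T q ! (?n - p)" "?n - p < length (rsuf T q)"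
    using assms len_rsuf[of p T] by auto
  have "rsuf T p ! (?n - p) = rev T ! (?n - 1)" using assms unfolding rsuf_def
    by (subst nth_drop) auto
  also have "\<dots> = 1" using assms by (subst rev_nth) auto
  finally have "rev T ! (q - 1 + (?n - p)) = 1" using e assms unfolding rsuf_def
    by (subst (asm) nth_drop) auto
  moreover have idx: "q - 1 + (?n - p) < ?n" using e(2) assms len_rsuf[of q T] by auto
  ultimately have A: "T ! (?n - Suc (q - 1 + (?n - p))) = 1" by (simp add: rev_nth)
  define d where "d = q - 1 + (?n - p)"
  have "d \<noteq> ?n - 1" using assms unfolding d_def by auto
  then have "?n - d \<in> {2..?n}" using idx unfolding d_def by auto
  then have B: "T ! (?n - d - 1) \<noteq> 1" using assms(2) unfolding ch_def by blast
  have "?n - d - 1 = ?n - Suc d" by (simp only: diff_Suc_eq_diff_pred diff_diff_left)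
  with A B show False unfolding d_def by metis
qed

lemma LCP_lt:
  assumes "T ! 0 = 1" "\<forall>k \<in> {2..length T}. ch T k \<noteq> 1" "k \<in> {2..length T}"
  shows "LCPr T k < textpos T k" "LCPr T k < textpos T (k - 1)"
proof -
  have r: "SAr T k \<in> {1..length T}" "SAr T (k-1) \<in> {1..length T}" proof -
    have "k-1 \<in> {1..length T}" "k \<in> {1..length T}" using assms by auto
    then show "SAr T k \<in> {1..length T}" "SAr T (k-1) \<in> {1..length T}" using SAr_range by blast+
  qed
  have ne: "SAr T (k-1) \<noteq> SAr T k"
  proof
    assume "SAr T (k-1) = SAr T k"
    moreover have "k-1 \<in> {1..length T}" "k \<in> {1..length T}" "k - 1 \<noteq> k" using assms by auto
    ultimately show False using SAr_inj by blast
  qed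
  show "LCPr T k < textpos T k"
    using rsuf_distinct_lcp[OF assms(1,2) r(1) r(2) ne[symmetric]] assms r len_rsuf
    unfolding LCPr_def textpos_def by (auto simp: lcp_comm)
  show "LCPr T k < textpos T (k - 1)"
    using rsuf_distinct_lcp[OF assms(1,2) r(2) r(1) ne] assms r len_rsuf
    unfolding LCPr_def textpos_def by auto
qed

lemma rev_substr:
  assumes "k \<in> {1..length T}" "L < textpos T k"
  shows "rev (substr T (textpos T k - L) (textpos T k)) = take (L + 1) (rsuf T (SAr T k))"
proof -
  let ?n = "length T" and ?t = "textpos T k"
  have r: "SAr T k \<in> {1..?n}" using assms SAr_range by auto
  have t: "?t \<le> ?n" "?n - ?t = SAr T k - 1" using r unfolding textpos_def by auto
  have "substr T (?t - L) ?t = take (L+1) (drop (?t - L - 1) T)"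
    unfolding substr_def using assms by (auto simp: Suc_diff_le)
  also have "\<dots> = drop (?t - L - 1) (take ?t T)" using assms
    by (simp add: take_drop)
  finally have "rev (substr T (?t - L) ?t) = rev (drop (?t - L - 1) (take ?t T))" by simp
  also have "\<dots> = take (?t - (?t - L - 1)) (rev (take ?t T))"
    using t by (simp add: rev_drop min_def)
  also have "rev (take ?t T) = drop (?n - ?t) (rev T)" using t by (simp add: rev_take)
  also have "?t - (?t - L - 1) = L + 1" using assms by auto
  finally show ?thesis unfolding rsuf_def using t by simp
qed

theorem mainTheorem5:
  fixes T :: "nat list" and \<sigma> :: nat and x a :: nat
  assumes "length T \<ge> 2"
    and "set T = {1..\<sigma>}"
    and "ch T 1 = 1"
    and "\<forall>k \<in> {2..length T}. ch T k \<noteq> 1"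
    and "x \<in> {1..length T}"
    and "a_below T a x"
  shows "\<forall>j j'. run_break T (ch T x) j \<and> j < bwtpos T x - a
           \<and> j' \<in> {j - 1, j} \<and> BWTr T j' = ch T x \<longrightarrow>
         length (lcs (substr T (textpos T j' - LCPr T j) (textpos T j')) (substr T 1 x))
         \<le> length (lcs (substr T 1 x)
               (substr T (textpos T (bwtpos T x - a) - LCPr T (bwtpos T x - a))
                         (textpos T (bwtpos T x - a))))"
proof (intro allI impI)
  fix j j'
  assume h: "run_break T (ch T x) j \<and> j < bwtpos T x - a
           \<and> j' \<in> {j - 1, j} \<and> BWTr T j' = ch T x"
  let ?n = "length T"
  define i where "i = bwtpos T x"
  define m where "m = i - a"
  define s where "s = (\<lambda>k. rsuf T (SAr T k))"
  have T0: "T ! 0 = 1" using assms(3) unfolding ch_def by simp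
  have i: "i \<in> {1..?n}" "SAr T i = ?n + 1 - x" using bwtpos_props[OF assms(5)] unfolding i_def by auto
  have j: "j \<in> {2..?n}" "j < m" using h unfolding run_break_def m_def i_def by auto
  have j': "1 \<le> j'" "j' \<le> j" using h j by auto
  have m: "2 \<le> m" "m \<le> i" using j j' unfolding m_def by auto
  have sx: "rev (substr T 1 x) = s i"
  proof -
    have "substr T 1 x = take x T" unfolding substr_def using assms(5) by auto
    then show ?thesis unfolding s_def rsuf_def using i assms(5) by (simp add: rev_take)
  qed
  have L1: "LCPr T j < textpos T j'"
    using LCP_lt[OF T0 assms(4) j(1)] h by auto
  have L2: "LCPr T m < textpos T m" using LCP_lt[OF T0 assms(4)] m i by auto
  have r1: "rev (substr T (textpos T j' - LCPr T j) (textpos T j')) = take (LCPr T j + 1) (s j')"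
    unfolding s_def by (rule rev_substr) (use L1 j j' in auto)
  have r2: "rev (substr T (textpos T m - LCPr T m) (textpos T m)) = take (LCPr T m + 1) (s m)"
    unfolding s_def by (rule rev_substr) (use L2 m i in auto)
  have lhs: "length (lcs (substr T (textpos T j' - LCPr T j) (textpos T j')) (substr T 1 x))
     = length (lcp (take (LCPr T j + 1) (s j')) (s i))"
    unfolding lcs_def length_rev r1 sx ..
  have rhs: "length (lcs (substr T 1 x)
               (substr T (textpos T m - LCPr T m) (textpos T m)))
     = length (lcp (take (LCPr T m + 1) (s m)) (s i))"
    unfolding lcs_def length_rev r2 sx lcp_comm[of "s i"] ..
  define P where "P = length (lcp (s j') (s i))"
  have o1: "s j' \<le> s m" "s m \<le> s i" "s j' \<le> s (m-1)" "s (m-1) \<le> s m"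
    unfolding s_def by (rule SAr_sorted; use j j' m i in simp)+
  have "length (lcp (take (LCPr T j + 1) (s j')) (s i)) \<le> P"
    unfolding P_def lcp_take1 by simp
  moreover have P1: "P \<le> length (lcp (s m) (s i))" "P \<le> length (lcp (s j') (s m))"
    using lcp_sorted[OF o1(1,2)] unfolding P_def by simp_all
  moreover have "LCPr T m = length (lcp (s (m-1)) (s m))"
    unfolding LCPr_def s_def using m by simp
  then have "length (lcp (s j') (s m)) \<le> LCPr T m"
    using lcp_sorted[OF o1(3,4)] by simp
  ultimately have "length (lcp (take (LCPr T j + 1) (s j')) (s i))
       \<le> length (lcp (take (LCPr T m + 1) (s m)) (s i))"
    unfolding lcp_take1 by simp
  then show "length (lcs (substr T (textpos T j' - LCPr T j) (textpos T j')) (substr T 1 x))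
         \<le> length (lcs (substr T 1 x)
               (substr T (textpos T (bwtpos T x - a) - LCPr T (bwtpos T x - a))
                         (textpos T (bwtpos T x - a))))"
    using lhs rhs unfolding m_def i_def by simp
qed

end
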